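(* Let $H$ be a Hermitian operator on a $d$-dimensional Hilbert space with spectral decomposition $H=\sum_{i=1}^M\lambda_i\Pi_i$, where $M\ge 2$, $\lambda_M>\cdots>\lambda_1$ are the distinct eigenvalues and $\Pi_i$ the spectral projections. Let $\Delta=\lambda_2-\lambda_1$, $d_G=\operatorname{Tr}[\Pi_1]$, and $\varepsilon\in(0,1)$. If $$\beta=\frac{1}{\Delta}\ln\!\left[\left(\frac{1-\varepsilon}{\varepsilon}\right)\left(\frac{d-d_G}{d_G}\right)\right]$$ and $\beta\ge 0$, then $$F\!\left(\frac{e^{-\beta H}}{\operatorname{Tr}[e^{-\beta H}]},\frac{\Pi_1}{\operatorname{Tr}[\Pi_1]}\right)\ge 1-\varepsilon.$$
   Context: The fidelity of states $\rho,\sigma$ is $F(\rho,\sigma)=\|\sqrt{\rho}\sqrt{\sigma}\|_1^2$, where $\|A\|_1=\operatorname{Tr}[\sqrt{A^\dagger A}]$. *)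

theory Defs
  imports "HOL-Analysis.Analysis"
begin

text \<open>Operators on a d-dimensional Hilbert space are complex matrices indexed by a
finite type 'n, with d = CARD('n).\<close>

definition adj :: "complex^'n^'n \<Rightarrow> complex^'n^'n" where
  "adj A = (\<chi> i j. cnj (A $ j $ i))"

definition hermitian :: "complex^'n^'n \<Rightarrow> bool" where
  "hermitian A \<longleftrightarrow> adj A = A"

definition psd :: "complex^'n^'n \<Rightarrow> bool" where
  "psd A \<longleftrightarrow> hermitian A \<and>
     (\<forall>v :: complex^'n. 0 \<le> Re (\<Sum>i\<in>UNIV. cnj (v $ i) * (A *v v) $ i))"

definition msqrt :: "complex^'n^'n \<Rightarrow> complex^'n^'n" where
  "msqrt A = (THE B. psd B \<and> B ** B = A)"

definition trace_norm :: "complex^'n^'n \<Rightarrow> real" where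
  "trace_norm A = Re (trace (msqrt (adj A ** A)))"

definition fidelity :: "complex^'n^'n \<Rightarrow> complex^'n^'n \<Rightarrow> real" where
  "fidelity \<rho> \<sigma> = (trace_norm (msqrt \<rho> ** msqrt \<sigma>))^2"

fun mpow :: "complex^'n^'n \<Rightarrow> nat \<Rightarrow> complex^'n^'n" where
  "mpow A 0 = mat 1"
| "mpow A (Suc k) = A ** mpow A k"

definition mexp :: "complex^'n^'n \<Rightarrow> complex^'n^'n" where
  "mexp A = (\<Sum>k. (1 / fact k :: real) *\<^sub>R mpow A k)"

definition mscale :: "complex \<Rightarrow> complex^'n^'n \<Rightarrow> complex^'n^'n" where
  "mscale c A = (\<chi> i j. c * A $ i $ j)"

end

theory Submission
  imports Defs
begin


lemma sc: "(r::real) *\<^sub>R (z::complex) = of_real r * z"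
  by (simp add: scaleR_conv_of_real)

lemma cnj_sq: "cnj z * z = of_real ((cmod z)^2)"
  using complex_norm_square[of z] by (simp add: mult.commute power2_eq_square)

lemma mm_sum_left: "finite S \<Longrightarrow> (\<Sum>i\<in>S. f i) ** (B::complex^'n^'n) = (\<Sum>i\<in>S. f i ** B)"
  by (induction S rule: finite_induct) (auto simp: matrix_matrix_mult_def vec_eq_iff sum.distrib algebra_simps)

lemma mm_sum_right: "finite S \<Longrightarrow> (B::complex^'n^'n) ** (\<Sum>i\<in>S. f i) = (\<Sum>i\<in>S. B ** f i)"
  by (induction S rule: finite_induct) (simp_all add: matrix_add_ldistrib)

lemma mv_sum: "finite S \<Longrightarrow> (\<Sum>i\<in>S. f i) *v (v::complex^'n) = (\<Sum>i\<in>S. f i *v v)"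
  by (induction S rule: finite_induct) (auto simp: matrix_vector_mult_add_rdistrib)

lemma mv_sum2: "finite S \<Longrightarrow> (A::complex^'n^'n) *v (\<Sum>i\<in>S. f i) = (\<Sum>i\<in>S. A *v f i)"
  by (induction S rule: finite_induct) (simp_all add: matrix_vector_right_distrib)

lemma mv_scaleR: "((r::real) *\<^sub>R (A::complex^'n^'n)) *v v = r *\<^sub>R (A *v v)"
  by (simp add: matrix_vector_mult_def vec_eq_iff scaleR_sum_right)

lemma mv_scaleR2: "(A::complex^'n^'n) *v ((r::real) *\<^sub>R v) = r *\<^sub>R (A *v v)"
  by (simp add: matrix_vector_mult_def vec_eq_iff sc sum_distrib_left mult_ac)

lemma trace_sum: "finite S \<Longrightarrow> trace (\<Sum>i\<in>S. f i) = (\<Sum>i\<in>S. trace (f i :: complex^'n^'n))"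
  by (induction S rule: finite_induct) (auto simp: trace_add trace_0[simplified])

lemma trace_scaleR: "trace ((r::real) *\<^sub>R (A::complex^'n^'n)) = of_real r * trace A"
  by (simp add: trace_def sum_distrib_left sc)

lemma adj_sum: "finite S \<Longrightarrow> adj (\<Sum>i\<in>S. f i) = (\<Sum>i\<in>S. adj (f i :: complex^'n^'n))"
  by (induction S rule: finite_induct) (auto simp: adj_def vec_eq_iff sum_component)

lemma adj_scaleR: "adj ((r::real) *\<^sub>R (A::complex^'n^'n)) = r *\<^sub>R adj A"
  by (simp add: adj_def vec_eq_iff sc)

lemma adj_mult: "adj ((A::complex^'n^'n) ** B) = adj B ** adj A"
  by (simp add: adj_def vec_eq_iff matrix_matrix_mult_def mult.commute)

lemma mscale_real: "mscale (of_real r) A = r *\<^sub>R A"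
  by (simp add: mscale_def vec_eq_iff sc)

definition ip :: "complex^'n \<Rightarrow> complex^'n \<Rightarrow> complex" where
  "ip v w = (\<Sum>i\<in>UNIV. cnj (v $ i) * w $ i)"

lemma ip_adj: "ip v ((A::complex^'n^'n) *v w) = ip (adj A *v v) w"
proof -
  have L: "ip v (A *v w) = (\<Sum>i\<in>UNIV. \<Sum>j\<in>UNIV. cnj (v$i) * A$i$j * w$j)"
    unfolding ip_def matrix_vector_mult_def by (simp add: sum_distrib_left mult.assoc)
  have R: "ip (adj A *v v) w = (\<Sum>j\<in>UNIV. \<Sum>i\<in>UNIV. cnj (v$i) * A$i$j * w$j)"
    unfolding ip_def matrix_vector_mult_def adj_def by (simp add: sum_distrib_left sum_distrib_right mult_ac)
  show ?thesis unfolding L R by (rule sum.swap)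
qed

lemma ip_self: "ip v v = of_real (\<Sum>i\<in>UNIV. (cmod (v $ i))^2)"
  unfolding ip_def by (simp add: cnj_sq)

lemma ip_self_Re_nonneg: "0 \<le> Re (ip v v)"
  by (simp add: ip_self sum_nonneg)

lemma ip_self_zero: "Re (ip v v) = 0 \<Longrightarrow> v = 0"
  by (simp add: ip_self vec_eq_iff sum_nonneg_eq_0_iff)

lemma ip_add: "ip v (a + b) = ip v a + ip v b"
  by (simp add: ip_def sum.distrib algebra_simps)

lemma ip_diff: "ip v (a - b) = ip v a - ip v b"
  by (simp add: ip_def sum_subtractf algebra_simps)

lemma ip_scaleR: "ip v ((r::real) *\<^sub>R a) = of_real r * ip v a"
  by (simp add: ip_def sum_distrib_left sc algebra_simps)

lemma ip_sum: "finite S \<Longrightarrow> ip v (\<Sum>i\<in>S. f i) = (\<Sum>i\<in>S. ip v (f i))"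
  by (induction S rule: finite_induct) (simp_all add: ip_add, simp add: ip_def)

lemma ip_zero: "ip v 0 = 0"
  by (simp add: ip_def)

lemma key_sqrt:
  fixes B :: "complex^'n^'n"
  assumes "psd B" "B *v (B *v v) = mu *\<^sub>R v" "mu \<ge> 0"
  shows "B *v v = sqrt mu *\<^sub>R v"
proof -
  have hB: "adj B = B" using assms(1) by (simp add: psd_def hermitian_def)
  have pos: "\<And>w. 0 \<le> Re (ip w (B *v w))" using assms(1)
    unfolding psd_def ip_def by blast
  define s where "s = sqrt mu"
  have s0: "s \<ge> 0" using assms(3) by (simp add: s_def)
  have ss: "s * s = mu" using assms(3) by (simp add: s_def)
  show ?thesis
  proof (cases "s = 0")
    case True
    then have "mu = 0" using ss by simp
    then have "B *v (B *v v) = 0" using assms(2) by simp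
    then have "ip v (B *v (B *v v)) = 0" by (simp add: ip_zero)
    then have "ip (B *v v) (B *v v) = 0"
      using ip_adj[of v B "B *v v"] hB by simp
    then have "B *v v = 0" using ip_self_zero[of "B *v v"] by simp
    then show ?thesis using True s_def by simp
  next
    case False
    then have sp: "s > 0" using s0 by simp
    define w where "w = B *v v - s *\<^sub>R v"
    have "B *v w = B *v (B *v v) - s *\<^sub>R (B *v v)"
      unfolding w_def by (simp only: matrix_vector_mult_diff_distrib mv_scaleR2)
    also have "... = (s * s) *\<^sub>R v - s *\<^sub>R (B *v v)" by (simp only: assms(2) ss)
    also have "... = (- s) *\<^sub>R w" unfolding w_def by (simp add: algebra_simps)
    finally have Bw: "B *v w = (- s) *\<^sub>R w" .
    have "0 \<le> Re (ip w (B *v w))" by (rule pos)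
    also have "Re (ip w (B *v w)) = - s * Re (ip w w)" by (simp only: Bw ip_scaleR) simp
    finally have "0 \<le> - s * Re (ip w w)" .
    then have "Re (ip w w) \<le> 0" using sp
      by (metis mult_minus_left neg_0_le_iff_le zero_le_mult_iff not_le)
    then have "Re (ip w w) = 0" using ip_self_Re_nonneg[of w] by linarith
    then have "w = 0" by (rule ip_self_zero)
    then show ?thesis by (simp add: w_def s_def)
  qed
qed



locale spec =
  fixes P :: "nat \<Rightarrow> complex^'n^'n" and M :: nat
  assumes hermP: "\<And>i. i \<in> {1..M} \<Longrightarrow> adj (P i) = P i"
    and idemP: "\<And>i. i \<in> {1..M} \<Longrightarrow> P i ** P i = P i"
    and nzP: "\<And>i. i \<in> {1..M} \<Longrightarrow> P i \<noteq> 0"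
    and orthP: "\<And>i j. i \<in> {1..M} \<Longrightarrow> j \<in> {1..M} \<Longrightarrow> i \<noteq> j \<Longrightarrow> P i ** P j = 0"
    and complP: "(\<Sum>i=1..M. P i) = mat 1"
begin

definition fc :: "(nat \<Rightarrow> real) \<Rightarrow> complex^'n^'n" where
  "fc mu = (\<Sum>i=1..M. mu i *\<^sub>R P i)"

lemma fc_P: "k \<in> {1..M} \<Longrightarrow> fc mu ** P k = mu k *\<^sub>R P k"
proof -
  assume k: "k \<in> {1..M}"
  have "fc mu ** P k = (\<Sum>i=1..M. mu i *\<^sub>R (P i ** P k))"
    by (simp add: fc_def mm_sum_left scalar_matrix_assoc)
  also have "... = (\<Sum>i=1..M. if i = k then mu k *\<^sub>R P k else 0)"
    by (rule sum.cong) (use k idemP orthP in auto)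
  also have "... = mu k *\<^sub>R P k" using k by simp
  finally show ?thesis .
qed

lemma fc_mult: "fc mu ** fc nu = fc (\<lambda>i. mu i * nu i)"
proof -
  have "fc mu ** fc nu = (\<Sum>i=1..M. nu i *\<^sub>R (fc mu ** P i))"
    by (simp add: fc_def[of nu] mm_sum_right matrix_scalar_ac scalar_matrix_assoc)
  also have "... = (\<Sum>i=1..M. (mu i * nu i) *\<^sub>R P i)"
    by (rule sum.cong) (auto simp: fc_P)
  finally show ?thesis by (simp add: fc_def)
qed

lemma fc_one: "fc (\<lambda>i. 1) = mat 1"
  unfolding fc_def using complP by simp

lemma fc_cong: "(\<And>i. i \<in> {1..M} \<Longrightarrow> mu i = nu i) \<Longrightarrow> fc mu = fc nu"
  unfolding fc_def by (rule sum.cong) auto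

lemma adj_fc: "adj (fc mu) = fc mu"
  by (simp add: fc_def adj_sum adj_scaleR hermP)

lemma trace_fc: "trace (fc mu) = (\<Sum>i=1..M. of_real (mu i) * trace (P i))"
  by (simp add: fc_def trace_sum trace_scaleR)

lemma fc_mv_P: "k \<in> {1..M} \<Longrightarrow> fc mu *v (P k *v v) = mu k *\<^sub>R (P k *v v)"
  by (simp add: matrix_vector_mul_assoc fc_P mv_scaleR)

lemma psd_fc: "(\<And>i. i \<in> {1..M} \<Longrightarrow> mu i \<ge> 0) \<Longrightarrow> psd (fc mu)"
proof -
  assume nn: "\<And>i. i \<in> {1..M} \<Longrightarrow> mu i \<ge> 0"
  have "0 \<le> Re (ip v (fc mu *v v))" for v
  proof -
    have "ip v (fc mu *v v) = (\<Sum>i=1..M. of_real (mu i) * ip v (P i *v v))"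
      by (simp add: fc_def mv_sum ip_sum mv_scaleR ip_scaleR)
    also have "... = (\<Sum>i=1..M. of_real (mu i) * ip (P i *v v) (P i *v v))"
    proof (rule sum.cong)
      fix i assume i: "i \<in> {1..M}"
      have "ip v (P i *v v) = ip v (P i *v (P i *v v))"
        by (simp add: matrix_vector_mul_assoc idemP[OF i])
      also have "... = ip (P i *v v) (P i *v v)" by (simp add: ip_adj hermP[OF i])
      finally show "of_real (mu i) * ip v (P i *v v) = of_real (mu i) * ip (P i *v v) (P i *v v)"
        by simp
    qed simp
    finally have "Re (ip v (fc mu *v v)) = (\<Sum>i=1..M. mu i * Re (ip (P i *v v) (P i *v v)))"
      by (simp add: Re_sum)
    also have "... \<ge> 0" by (rule sum_nonneg) (simp add: nn ip_self_Re_nonneg)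
    finally show ?thesis .
  qed
  then show "psd (fc mu)" by (simp add: psd_def hermitian_def adj_fc ip_def)
qed

lemma msqrt_fc:
  assumes nn: "\<And>i. i \<in> {1..M} \<Longrightarrow> mu i \<ge> 0"
  shows "msqrt (fc mu) = fc (\<lambda>i. sqrt (mu i))"
  unfolding msqrt_def
proof (rule the_equality)
  show "psd (fc (\<lambda>i. sqrt (mu i))) \<and> fc (\<lambda>i. sqrt (mu i)) ** fc (\<lambda>i. sqrt (mu i)) = fc mu"
  proof
    show "psd (fc (\<lambda>i. sqrt (mu i)))" using nn by (intro psd_fc) simp
    show "fc (\<lambda>i. sqrt (mu i)) ** fc (\<lambda>i. sqrt (mu i)) = fc mu"
      unfolding fc_mult using nn by (intro fc_cong) simp
  qed
next
  fix B assume B: "psd B \<and> B ** B = fc mu"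
  have "B *v v = fc (\<lambda>i. sqrt (mu i)) *v v" for v
  proof -
    have v: "v = (\<Sum>i=1..M. P i *v v)" using complP by (simp flip: mv_sum)
    have "B *v (P i *v v) = fc (\<lambda>i. sqrt (mu i)) *v (P i *v v)" if i: "i \<in> {1..M}" for i
    proof -
      have "B *v (B *v (P i *v v)) = (B ** B) *v (P i *v v)" by (rule matrix_vector_mul_assoc)
      also have "... = fc mu *v (P i *v v)" using B by simp
      also have "... = mu i *\<^sub>R (P i *v v)" by (rule fc_mv_P[OF i])
      finally have "B *v (B *v (P i *v v)) = mu i *\<^sub>R (P i *v v)" .
      then have "B *v (P i *v v) = sqrt (mu i) *\<^sub>R (P i *v v)"
        using key_sqrt[of B "P i *v v" "mu i"] B nn[OF i] by simp
      then show ?thesis by (simp add: fc_mv_P[OF i])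
    qed
    then have "B *v (\<Sum>i=1..M. P i *v v) = fc (\<lambda>i. sqrt (mu i)) *v (\<Sum>i=1..M. P i *v v)"
      by (simp add: mv_sum2)
    then show ?thesis using v by simp
  qed
  then show "B = fc (\<lambda>i. sqrt (mu i))" by (simp add: matrix_eq)
qed

lemma mpow_fc: "mpow (fc mu) k = fc (\<lambda>i. mu i ^ k)"
  by (induction k) (simp_all add: fc_one[symmetric] fc_mult)

lemma mexp_fc: "mexp (fc mu) = fc (\<lambda>i. exp (mu i))"
proof -
  have "(\<lambda>k. (1 / fact k :: real) *\<^sub>R mpow (fc mu) k) = (\<lambda>k. \<Sum>i=1..M. (mu i ^ k / fact k) *\<^sub>R P i)"
    by (simp only: mpow_fc) (simp add: fc_def scaleR_sum_right)
  moreover have "(\<lambda>k. \<Sum>i=1..M. (mu i ^ k / fact k) *\<^sub>R P i) sums fc (\<lambda>i. exp (mu i))"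
    unfolding fc_def
  proof (rule sums_sum, rule sums_scaleR_left)
    fix i
    have "(\<lambda>n. mu i ^ n /\<^sub>R fact n) sums exp (mu i)" by (rule exp_converges)
    then show "(\<lambda>n. mu i ^ n / fact n) sums exp (mu i)"
      by (simp add: scaleR_conv_of_real divide_inverse mult.commute)
  qed
  ultimately show ?thesis unfolding mexp_def by (simp add: sums_iff)
qed

end


context spec begin

lemma fc_scale: "r *\<^sub>R fc mu = fc (\<lambda>i. r * mu i)"
  by (simp add: fc_def scaleR_sum_right)

lemma fc_delta: "k \<in> {1..M} \<Longrightarrow> fc (\<lambda>i. if i = k then 1 else 0) = P k"
proof -
  assume k: "k \<in> {1..M}"
  have "fc (\<lambda>i. if i = k then 1 else 0) = (\<Sum>i=1..M. if i = k then P k else 0)"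
    unfolding fc_def by (rule sum.cong) auto
  also have "... = P k" using k by simp
  finally show ?thesis .
qed

lemma trace_P: assumes i: "i \<in> {1..M}"
  shows "trace (P i) = of_real (Re (trace (P i))) \<and> Re (trace (P i)) > 0"
proof -
  define S where "S = (\<Sum>j\<in>UNIV. \<Sum>k\<in>UNIV. (cmod (P i $ k $ j))^2)"
  have "trace (P i) = trace (adj (P i) ** P i)" using hermP[OF i] idemP[OF i] by simp
  also have "... = (\<Sum>j\<in>UNIV. \<Sum>k\<in>UNIV. of_real ((cmod (P i $ k $ j))^2))"
    by (simp add: trace_def matrix_matrix_mult_def adj_def cnj_sq)
  also have "... = of_real S" by (simp add: S_def)
  finally have tr: "trace (P i) = of_real S" .
  obtain k j where kj: "P i $ k $ j \<noteq> 0" using nzP[OF i] by (auto simp: vec_eq_iff)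
  have "0 < (cmod (P i $ k $ j))^2" using kj by simp
  also have "... \<le> (\<Sum>k\<in>UNIV. (cmod (P i $ k $ j))^2)"
    by (rule member_le_sum) auto
  also have "... \<le> S" unfolding S_def
    by (rule member_le_sum[where f="\<lambda>j. \<Sum>k\<in>UNIV. (cmod (P i $ k $ j))^2"]) (auto intro: sum_nonneg)
  finally show ?thesis using tr by simp
qed

lemma sum_traces: "(\<Sum>i=1..M. Re (trace (P i))) = real CARD('n)"
proof -
  have "trace (mat 1 :: complex^'n^'n) = (\<Sum>i=1..M. trace (P i))"
    by (simp add: complP[symmetric] trace_sum)
  then have "Re (trace (mat 1 :: complex^'n^'n)) = (\<Sum>i=1..M. Re (trace (P i)))"
    by (simp add: Re_sum)
  then show ?thesis by (simp add: trace_I)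
qed

lemma Re_trace_fc: "Re (trace (fc mu)) = (\<Sum>i=1..M. mu i * Re (trace (P i)))"
proof -
  have "trace (fc mu) = (\<Sum>i=1..M. of_real (mu i * Re (trace (P i))))"
    unfolding trace_fc by (rule sum.cong) (use trace_P in auto)
  then show ?thesis by (simp add: Re_sum)
qed

lemma trace_fc_real: "trace (fc mu) = of_real (Re (trace (fc mu)))"
proof -
  have "trace (fc mu) = (\<Sum>i=1..M. of_real (mu i * Re (trace (P i))))"
    unfolding trace_fc by (rule sum.cong) (use trace_P in auto)
  then show ?thesis by (simp add: Re_sum)
qed

end


lemma final_ineq:
  fixes e1 t1 Zr D X S eps :: real
  assumes "e1 > 0" "t1 > 0" "D > 0" "0 < eps" "eps < 1"
    and "X = ((1 - eps) / eps) * (D / t1)"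
    and "Zr = e1 * t1 + S" "S * X \<le> e1 * D" "S \<ge> 0"
  shows "e1 * t1 / Zr \<ge> 1 - eps"
proof -
  have X0: "X > 0" using assms by simp
  have XD: "(1 - eps) * D = eps * t1 * X" using assms by (simp add: field_simps)
  have "(1 - eps) * Zr * X = (1 - eps) * e1 * t1 * X + (1 - eps) * (S * X)"
    using assms(7) by (simp add: algebra_simps)
  also have "... \<le> (1 - eps) * e1 * t1 * X + (1 - eps) * (e1 * D)"
    using assms(5,8) by (intro add_left_mono mult_left_mono) auto
  also have "(1 - eps) * (e1 * D) = e1 * ((1 - eps) * D)" by (simp add: algebra_simps)
  also have "... = e1 * (eps * t1 * X)" using XD by simp
  finally have "(1 - eps) * Zr * X \<le> (e1 * t1) * X" by (simp add: algebra_simps)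
  then have "(1 - eps) * Zr \<le> e1 * t1" using X0 by simp
  moreover have "Zr > 0" using assms by (simp add: add_pos_nonneg)
  ultimately show ?thesis by (simp add: field_simps)
qed


theorem corollary2:
  fixes H :: "complex^'n^'n"
    and lam :: "nat \<Rightarrow> real"
    and P :: "nat \<Rightarrow> complex^'n^'n"
    and M :: nat and \<epsilon> \<beta> :: real
  assumes herm: "hermitian H"
    and M2: "M \<ge> 2"
    and proj: "\<forall>i\<in>{1..M}. hermitian (P i) \<and> P i ** P i = P i \<and> P i \<noteq> 0"
    and orth: "\<forall>i\<in>{1..M}. \<forall>j\<in>{1..M}. i \<noteq> j \<longrightarrow> P i ** P j = 0"
    and compl: "(\<Sum>i=1..M. P i) = mat 1"
    and incr: "strict_mono_on {1..M} lam"
    and decomp: "H = (\<Sum>i=1..M. lam i *\<^sub>R P i)"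
    and eps: "0 < \<epsilon>" "\<epsilon> < 1"
    and beta: "\<beta> = (1 / (lam 2 - lam 1)) *
        ln (((1 - \<epsilon>) / \<epsilon>) * ((real CARD('n) - Re (trace (P 1))) / Re (trace (P 1))))"
    and beta_nonneg: "\<beta> \<ge> 0"
  shows "fidelity (mscale (1 / trace (mexp ((- \<beta>) *\<^sub>R H))) (mexp ((- \<beta>) *\<^sub>R H)))
                  (mscale (1 / trace (P 1)) (P 1)) \<ge> 1 - \<epsilon>"
proof -
  interpret spec P M
    using proj orth compl by unfold_locales (auto simp: hermitian_def)
  define t where "t i = Re (trace (P i))" for i
  have tP: "trace (P i) = of_real (t i)" "t i > 0" if "i \<in> {1..M}" for i
    using trace_P[OF that] by (auto simp: t_def)
  have one: "1 \<in> {1..M}" and two: "2 \<in> {1..M}" using M2 by auto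
  define e where "e i = exp (- \<beta> * lam i)" for i
  have e_pos: "e i > 0" for i by (simp add: e_def)
  have H': "(- \<beta>) *\<^sub>R H = fc (\<lambda>i. - \<beta> * lam i)"
    by (simp add: decomp fc_def scaleR_sum_right)
  have E: "mexp ((- \<beta>) *\<^sub>R H) = fc e"
    unfolding H' mexp_fc e_def by simp
  define Zr where "Zr = (\<Sum>i=1..M. e i * t i)"
  have trE: "trace (fc e) = of_real Zr"
    using trace_fc_real[of e] by (simp add: Re_trace_fc Zr_def t_def)
  define S where "S = (\<Sum>i=2..M. e i * t i)"
  have Zsplit: "Zr = e 1 * t 1 + S"
    unfolding Zr_def S_def using M2 by (simp add: sum.atLeast_Suc_atMost numeral_2_eq_2)
  have S0: "S \<ge> 0" unfolding S_def
    by (rule sum_nonneg) (use tP e_pos in \<open>auto intro!: mult_nonneg_nonneg less_imp_le\<close>)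
  have Zpos: "Zr > 0" using Zsplit S0 e_pos[of 1] tP(2)[OF one] by (simp add: add_pos_nonneg)
  have rho: "mscale (1 / trace (mexp ((- \<beta>) *\<^sub>R H))) (mexp ((- \<beta>) *\<^sub>R H)) = fc (\<lambda>i. e i / Zr)"
  proof -
    have c: "1 / trace (fc e) = of_real (1 / Zr)" unfolding trE by simp
    show ?thesis unfolding E c mscale_real fc_scale by simp
  qed
  have sigma: "mscale (1 / trace (P 1)) (P 1) = fc (\<lambda>i. if i = 1 then 1 / t 1 else 0)"
  proof -
    have c: "1 / trace (P 1) = of_real (1 / t 1)" using tP(1)[OF one] by simp
    have "mscale (1 / trace (P 1)) (P 1) = (1 / t 1) *\<^sub>R fc (\<lambda>i. if i = 1 then 1 else 0)"
      by (simp only: c mscale_real fc_delta[OF one])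
    also have "... = fc (\<lambda>i. if i = 1 then 1 / t 1 else 0)"
      unfolding fc_scale by (rule fc_cong) simp
    finally show ?thesis .
  qed
  define a where "a i = sqrt (e i / Zr) * sqrt (if i = 1 then 1 / t 1 else 0)" for i
  have a_nn: "a i \<ge> 0" for i using e_pos[of i] Zpos tP(2)[OF one] by (simp add: a_def)
  have sq_rho: "msqrt (fc (\<lambda>i. e i / Zr)) = fc (\<lambda>i. sqrt (e i / Zr))"
    by (rule msqrt_fc) (use e_pos Zpos in \<open>simp add: less_imp_le\<close>)
  have sq_sigma: "msqrt (fc (\<lambda>i. if i = 1 then 1 / t 1 else 0)) = fc (\<lambda>i. sqrt (if i = 1 then 1 / t 1 else 0))"
    by (rule msqrt_fc) (use tP(2)[OF one] in \<open>simp add: less_imp_le\<close>)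
  have prod: "msqrt (fc (\<lambda>i. e i / Zr)) ** msqrt (fc (\<lambda>i. if i = 1 then 1 / t 1 else 0)) = fc a"
    unfolding sq_rho sq_sigma fc_mult a_def by simp
  have aa: "adj (fc a) ** fc a = fc (\<lambda>i. a i * a i)" by (simp add: adj_fc fc_mult)
  have sq_aa: "msqrt (fc (\<lambda>i. a i * a i)) = fc a"
  proof -
    have "msqrt (fc (\<lambda>i. a i * a i)) = fc (\<lambda>i. sqrt (a i * a i))" by (rule msqrt_fc) simp
    also have "... = fc a" by (rule fc_cong) (simp add: a_nn)
    finally show ?thesis .
  qed
  have tn: "trace_norm (fc a) = a 1 * t 1"
  proof -
    have "trace_norm (fc a) = (\<Sum>i=1..M. a i * t i)"
      unfolding trace_norm_def aa sq_aa Re_trace_fc t_def by simp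
    also have "... = (\<Sum>i=1..M. if i = 1 then a 1 * t 1 else 0)"
      by (rule sum.cong) (auto simp: a_def)
    also have "... = a 1 * t 1" using one by simp
    finally show ?thesis .
  qed
  have fid: "fidelity (mscale (1 / trace (mexp ((- \<beta>) *\<^sub>R H))) (mexp ((- \<beta>) *\<^sub>R H)))
                  (mscale (1 / trace (P 1)) (P 1)) = e 1 * t 1 / Zr"
  proof -
    have "fidelity (mscale (1 / trace (mexp ((- \<beta>) *\<^sub>R H))) (mexp ((- \<beta>) *\<^sub>R H)))
                  (mscale (1 / trace (P 1)) (P 1)) = (a 1 * t 1)^2"
      unfolding fidelity_def rho sigma prod tn ..
    also have "... = (e 1 / Zr) * (1 / t 1) * (t 1)^2"
      using e_pos[of 1] Zpos tP(2)[OF one]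
      by (simp add: a_def power_mult_distrib real_sqrt_mult[symmetric])
    also have "... = e 1 * t 1 / Zr" using tP(2)[OF one] by (simp add: power2_eq_square field_simps)
    finally show ?thesis .
  qed
  define D where "D = (\<Sum>i=2..M. t i)"
  have Dsum: "real CARD('n) - t 1 = D"
    using sum_traces M2 unfolding D_def t_def[symmetric]
    by (simp add: sum.atLeast_Suc_atMost numeral_2_eq_2)
  have Dpos: "D > 0"
  proof -
    have "t 2 \<le> D" unfolding D_def
      by (rule member_le_sum) (use M2 tP(2) in \<open>auto intro: less_imp_le\<close>)
    then show ?thesis using tP(2)[OF two] by simp
  qed
  define X where "X = ((1 - \<epsilon>) / \<epsilon>) * (D / t 1)"
  have Xpos: "X > 0" using eps Dpos tP(2)[OF one] by (simp add: X_def)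
  have Delta: "lam 2 - lam 1 > 0" using incr one two by (auto simp: strict_mono_on_def)
  have bD: "\<beta> * (lam 2 - lam 1) = ln X"
    using beta Delta Dsum by (simp add: X_def t_def)
  have e2X: "e 2 * X = e 1"
  proof -
    have xe: "exp (\<beta> * (lam 2 - lam 1)) = X" unfolding bD using Xpos by simp
    have "e 2 * X = exp (- \<beta> * lam 2) * exp (\<beta> * (lam 2 - lam 1))"
      unfolding xe e_def ..
    also have "... = e 1" by (simp add: e_def flip: exp_add) (simp add: algebra_simps)
    finally show ?thesis .
  qed
  have eiX: "e i * X \<le> e 1" if "i \<in> {2..M}" for i
  proof -
    have "lam 2 \<le> lam i" using incr that two
      by (cases "i = 2") (auto simp: strict_mono_on_def intro: less_imp_le)
    then have "e i \<le> e 2" using beta_nonneg by (simp add: e_def mult_left_mono)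
    then have "e i * X \<le> e 2 * X" using Xpos by simp
    then show ?thesis using e2X by simp
  qed
  have SX: "S * X \<le> e 1 * D"
  proof -
    have "S * X = (\<Sum>i=2..M. (e i * X) * t i)" unfolding S_def sum_distrib_right by (simp add: algebra_simps)
    also have "... \<le> (\<Sum>i=2..M. e 1 * t i)"
      by (rule sum_mono, rule mult_right_mono) (use eiX tP(2) in \<open>auto intro: less_imp_le\<close>)
    also have "... = e 1 * D" by (simp add: D_def sum_distrib_left)
    finally show ?thesis .
  qed
  have "e 1 * t 1 / Zr \<ge> 1 - \<epsilon>"
    by (rule final_ineq[OF e_pos tP(2)[OF one] Dpos eps X_def Zsplit SX S0])
  then show ?thesis using fid by simp
qed

end
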